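(* Let $r \geq 2$ be an integer, let $\mathcal{F}$ be a collection of $r$-uniform hypergraphs each with at least $t$ vertices, and let $0 < p < 1$. Let $\mathcal{P}^n$ denote the set of $r$-uniform hypergraphs on a fixed $n$-vertex set that contain no induced subgraph isomorphic to a member of $\mathcal{F}$, and let $c = c(p,\mathcal{F})$ be the constant such that \[ \Pr[G(n,p) \in \mathcal{P}^n] = 2^{(-c+o(1))\binom{n}{r}} \quad (n \to \infty). \] Then for every $\epsilon > 0$ there exist $n_0$ and $\delta > 0$ (depending only on $\epsilon$, $p$, $\mathcal{F}$) such that if $\mathcal{A}$ is a collection of $r$-uniform hypergraphs on a common vertex set of size $n > n_0$ with \[ \Pr[G(n,p) \in \mathcal{A}] > 2^{(-c+\epsilon)\binom{n}{r}}, \] then some hypergraph in $\mathcal{A}$ contains at least $\delta n^t$ induced subgraphs each isomorphic to a member of $\mathcal{F}$.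
   Context: $G(n,p)$ denotes the random $r$-uniform hypergraph on $n$ (labelled) vertices in which each $r$-element subset is an edge independently with probability $p$. It is known (Alekseev; Bollobás–Thomason) that for the hereditary property $\mathcal{P}$ of containing no induced member of $\mathcal{F}$, writing $\Pr[G(n,p)\in\mathcal{P}^n] = 2^{-c_n\binom{n}{r}}$, the limit $c(p,\mathcal{F}) = \lim_{n\to\infty} c_n$ exists; this is the constant $c$ above. An induced subgraph of a hypergraph $G$ is $G[S]$ for a vertex subset $S$ (all edges of $G$ contained in $S$); distinct induced subgraphs correspond to distinct vertex subsets. *)

theory Defs
  imports Complex_Main
begin

definition uniform_hg :: "nat \<Rightarrow> 'a set \<Rightarrow> 'a set set \<Rightarrow> bool" where
  "uniform_hg r V E \<longleftrightarrow> finite V \<and> (\<forall>e\<in>E. e \<subseteq> V \<and> card e = r)"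

definition r_sets :: "nat \<Rightarrow> nat \<Rightarrow> nat set set" where
  "r_sets r n = {e. e \<subseteq> {0..<n} \<and> card e = r}"

definition gnp_prob :: "nat \<Rightarrow> nat \<Rightarrow> real \<Rightarrow> nat set set set \<Rightarrow> real" where
  "gnp_prob r n p A =
     (\<Sum>E\<in>{E\<in>Pow (r_sets r n). E \<in> A}. p ^ card E * (1 - p) ^ (card (r_sets r n) - card E))"

definition induced_sub :: "'a set set \<Rightarrow> 'a set \<Rightarrow> 'a set set" where
  "induced_sub E S = {e\<in>E. e \<subseteq> S}"

definition hg_iso :: "'a set \<Rightarrow> 'a set set \<Rightarrow> 'b set \<Rightarrow> 'b set set \<Rightarrow> bool" where
  "hg_iso V1 E1 V2 E2 \<longleftrightarrow> (\<exists>f. bij_betw f V1 V2 \<and> (\<lambda>e. f ` e) ` E1 = E2)"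

definition induced_copy :: "(nat set \<times> nat set set) set \<Rightarrow> 'a set set \<Rightarrow> 'a set \<Rightarrow> bool" where
  "induced_copy F E S \<longleftrightarrow> (\<exists>(V, H)\<in>F. hg_iso S (induced_sub E S) V H)"

definition induced_copies :: "(nat set \<times> nat set set) set \<Rightarrow> nat \<Rightarrow> nat set set \<Rightarrow> nat set set" where
  "induced_copies F n E = {S. S \<subseteq> {0..<n} \<and> induced_copy F E S}"

definition free_family :: "nat \<Rightarrow> (nat set \<times> nat set set) set \<Rightarrow> nat \<Rightarrow> nat set set set" where
  "free_family r F n = {E\<in>Pow (r_sets r n). induced_copies F n E = {}}"

definition c_seq :: "nat \<Rightarrow> real \<Rightarrow> (nat set \<times> nat set set) set \<Rightarrow> nat \<Rightarrow> real" where
  "c_seq r p F n = - log 2 (gnp_prob r n p (free_family r F n)) / real (n choose r)"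

end

theory Submission imports Defs "HOL-Analysis.Analysis" begin

definition mu :: "real \<Rightarrow> 'a set \<Rightarrow> 'a set \<Rightarrow> real" where
  "mu p I E = p ^ card E * (1-p) ^ card (I - E)"
definition ex :: "real \<Rightarrow> 'a set \<Rightarrow> ('a set \<Rightarrow> real) \<Rightarrow> real" where
  "ex p I g = (\<Sum>E\<in>Pow I. mu p I E * g E)"

lemma ex_insert:
  assumes "finite I" "x \<notin> I"
  shows "ex p (insert x I) g = ex p I (\<lambda>E. p * g (insert x E) + (1-p) * g E)"
proof -
  have P: "Pow (insert x I) = Pow I \<union> insert x ` Pow I" by (rule Pow_insert)
  have disj: "Pow I \<inter> insert x ` Pow I = {}" using assms by auto
  have inj: "inj_on (insert x) (Pow I)" using assms unfolding inj_on_def by (metis PowD insert_ident subsetD)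
  have "ex p (insert x I) g = (\<Sum>E\<in>Pow I. mu p (insert x I) E * g E)
        + (\<Sum>E\<in>insert x ` Pow I. mu p (insert x I) E * g E)"
    unfolding ex_def P using assms disj by (simp add: sum.union_disjoint)
  also have "(\<Sum>E\<in>insert x ` Pow I. mu p (insert x I) E * g E)
      = (\<Sum>E\<in>Pow I. mu p (insert x I) (insert x E) * g (insert x E))"
    using inj by (simp add: sum.reindex)
  also have "(\<Sum>E\<in>Pow I. mu p (insert x I) (insert x E) * g (insert x E))
      = (\<Sum>E\<in>Pow I. mu p I E * (p * g (insert x E)))"
  proof (rule sum.cong[OF refl])
    fix E assume E: "E \<in> Pow I"
    then have fE: "finite E" "x \<notin> E" using assms finite_subset by auto
    have "insert x I - insert x E = I - E" using E assms by auto
    then show "mu p (insert x I) (insert x E) * g (insert x E) = mu p I E * (p * g (insert x E))"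
      unfolding mu_def using fE by simp
  qed
  also have "(\<Sum>E\<in>Pow I. mu p (insert x I) E * g E) = (\<Sum>E\<in>Pow I. mu p I E * ((1-p) * g E))"
  proof (rule sum.cong[OF refl])
    fix E assume E: "E \<in> Pow I"
    have "insert x I - E = insert x (I - E)" using E assms by auto
    moreover have "finite (I - E)" "x \<notin> I - E" using assms by auto
    ultimately show "mu p (insert x I) E * g E = mu p I E * ((1-p) * g E)"
      unfolding mu_def by simp
  qed
  finally have eq: "ex p (insert x I) g = (\<Sum>E\<in>Pow I. mu p I E * ((1-p) * g E)) + (\<Sum>E\<in>Pow I. mu p I E * (p * g (insert x E)))" .
  have "ex p I (\<lambda>E. p * g (insert x E) + (1-p) * g E) = (\<Sum>E\<in>Pow I. mu p I E * ((1-p) * g E) + mu p I E * (p * g (insert x E)))"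
    unfolding ex_def by (intro sum.cong) (auto simp: distrib_left)
  then show ?thesis using eq by (simp add: sum.distrib)
qed

lemma ex_empty: "ex p {} g = g {}"
  by (simp add: ex_def mu_def)

lemma ex_mono:
  assumes "0 \<le> p" "p \<le> 1" "\<And>E. E \<subseteq> I \<Longrightarrow> g E \<le> h E"
  shows "ex p I g \<le> ex p I h"
  unfolding ex_def using assms by (intro sum_mono mult_left_mono) (auto simp: mu_def)

lemma ex_cong:
  assumes "\<And>E. E \<subseteq> I \<Longrightarrow> g E = h E"
  shows "ex p I g = ex p I h"
  unfolding ex_def using assms by (intro sum.cong) auto

lemma ex_linear: "ex p I (\<lambda>E. a * g E + b * h E) = a * ex p I g + b * ex p I h"
  unfolding ex_def by (simp add: sum.distrib sum_distrib_left algebra_simps)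

lemma ex_const: assumes "finite I" shows "ex p I (\<lambda>_. c) = c"
  using assms
proof (induction I rule: finite_induct)
  case empty then show ?case by (simp add: ex_empty)
next
  case (insert x I)
  then show ?case by (simp add: ex_insert algebra_simps)
qed

lemma ex_nonneg:
  assumes "0 \<le> p" "p \<le> 1" "\<And>E. E \<subseteq> I \<Longrightarrow> 0 \<le> g E"
  shows "0 \<le> ex p I g"
  unfolding ex_def using assms by (intro sum_nonneg mult_nonneg_nonneg) (auto simp: mu_def)

lemma powr_inv_pow:
  fixes y :: real assumes "0 \<le> y" "m \<ge> 1"
  shows "(y powr (1/real m)) ^ m = y"
proof (cases "y = 0")
  case True then show ?thesis using assms by simp
next
  case False
  then have "y > 0" using assms by simp
  then have "(y powr (1/real m)) ^ m = (y powr (1/real m)) powr real m"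
    by (simp add: powr_realpow)
  also have "\<dots> = y" using assms \<open>y>0\<close> by (simp add: powr_powr)
  finally show ?thesis .
qed

lemma amgm_pow:
  fixes A :: "'b \<Rightarrow> real"
  assumes "finite J" "card J = m" "m \<ge> 1" "\<And>j. j\<in>J \<Longrightarrow> A j \<ge> 0"
  shows "(\<Prod>j\<in>J. A j) \<le> (\<Sum>j\<in>J. A j ^ m) / m"
proof -
  have ne: "J \<noteq> {}" using assms by auto
  have "(\<Prod>j\<in>J. A j ^ m) powr (1 / card J) \<le> (\<Sum>j\<in>J. A j ^ m / card J)"
    using arith_geom_mean[OF assms(1) ne, of "\<lambda>j. A j ^ m"] assms by simp
  moreover have "(\<Prod>j\<in>J. A j ^ m) = (\<Prod>j\<in>J. A j) ^ m" by (simp add: prod_power_distrib)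
  moreover have "((\<Prod>j\<in>J. A j) ^ m) powr (1/real m) = (\<Prod>j\<in>J. A j)"
  proof -
    have nn: "0 \<le> (\<Prod>j\<in>J. A j)" using assms by (simp add: prod_nonneg)
    show ?thesis
    proof (cases "(\<Prod>j\<in>J. A j) = 0")
      case True then show ?thesis using assms unfolding True by (simp add: power_0_left)
    next
      case False
      then have pos: "(\<Prod>j\<in>J. A j) > 0" using nn by simp
      have "((\<Prod>j\<in>J. A j) ^ m) = (\<Prod>j\<in>J. A j) powr real m" using pos by (simp add: powr_realpow)
      then show ?thesis using pos assms by (simp add: powr_powr)
    qed
  qed
  ultimately show ?thesis using assms by (simp add: sum_divide_distrib)
qed

lemma holder2:
  fixes a b :: "'b \<Rightarrow> real"
  assumes "finite J" "card J = m" "m \<ge> 1" "0 \<le> p" "p \<le> 1"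
    and "\<And>j. j\<in>J \<Longrightarrow> a j \<ge> 0" "\<And>j. j\<in>J \<Longrightarrow> b j \<ge> 0"
  shows "p * (\<Prod>j\<in>J. a j) + (1-p) * (\<Prod>j\<in>J. b j)
         \<le> (\<Prod>j\<in>J. (p * a j ^ m + (1-p) * b j ^ m) powr (1/real m))"
proof -
  define S where "S j = p * a j ^ m + (1-p) * b j ^ m" for j
  define R where "R j = S j powr (1/real m)" for j
  have S0: "S j \<ge> 0" if "j \<in> J" for j using assms that unfolding S_def by simp
  have RS: "R j ^ m = S j" if "j \<in> J" for j unfolding R_def using powr_inv_pow S0 that assms by simp
  have R0: "R j \<ge> 0" for j unfolding R_def by simp
  show ?thesis
  proof (cases "\<exists>j\<in>J. R j = 0")
    case True
    then obtain j where j: "j \<in> J" "R j = 0" by auto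
    then have "S j = 0" using RS[OF j(1)] assms by (metis power_0_left not_one_le_zero)
    moreover have "p * a j ^ m \<ge> 0" "(1-p) * b j ^ m \<ge> 0" using assms j by auto
    ultimately have "p * a j ^ m = 0" "(1-p) * b j ^ m = 0" unfolding S_def by linarith+
    then have z1: "p * (\<Prod>j\<in>J. a j) = 0" and z2: "(1-p) * (\<Prod>j\<in>J. b j) = 0"
      using j assms by (auto simp: prod_zero_iff)
    have "0 \<le> (\<Prod>j\<in>J. R j)" using R0 by (simp add: prod_nonneg)
    then show ?thesis unfolding R_def S_def by (simp only: z1 z2)
  next
    case False
    then have Rp: "R j > 0" if "j \<in> J" for j using R0 that by (metis less_eq_real_def)
    define A where "A j = a j / R j" for j
    define B where "B j = b j / R j" for j
    have AB1: "p * A j ^ m + (1-p) * B j ^ m = 1" if "j \<in> J" for j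
    proof -
      have "p * A j ^ m + (1-p) * B j ^ m = S j / R j ^ m"
        unfolding A_def B_def S_def by (simp add: power_divide add_divide_distrib)
      then show ?thesis using RS[OF that] Rp[OF that] by (metis divide_self power_not_zero less_irrefl)
    qed
    have pa: "(\<Prod>j\<in>J. a j) = (\<Prod>j\<in>J. A j) * (\<Prod>j\<in>J. R j)"
      proof -
      have "(\<Prod>j\<in>J. a j) = (\<Prod>j\<in>J. A j * R j)"
        by (rule prod.cong) (auto simp: A_def dest: Rp)
      then show ?thesis by (simp add: prod.distrib)
    qed
    have pb: "(\<Prod>j\<in>J. b j) = (\<Prod>j\<in>J. B j) * (\<Prod>j\<in>J. R j)"
      proof -
      have "(\<Prod>j\<in>J. b j) = (\<Prod>j\<in>J. B j * R j)"
        by (rule prod.cong) (auto simp: B_def dest: Rp)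
      then show ?thesis by (simp add: prod.distrib)
    qed
    have "p * (\<Prod>j\<in>J. A j) + (1-p) * (\<Prod>j\<in>J. B j)
          \<le> p * ((\<Sum>j\<in>J. A j ^ m) / m) + (1-p) * ((\<Sum>j\<in>J. B j ^ m) / m)"
      using amgm_pow[OF assms(1-3), of A] amgm_pow[OF assms(1-3), of B] assms Rp
      unfolding A_def B_def
      by (intro add_mono mult_left_mono) (auto simp: less_imp_le)
    also have "\<dots> = (\<Sum>j\<in>J. p * A j ^ m + (1-p) * B j ^ m) / m"
      by (simp add: sum.distrib sum_distrib_left add_divide_distrib)
    also have "\<dots> = 1" using AB1 assms by simp
    finally have le1: "p * (\<Prod>j\<in>J. A j) + (1-p) * (\<Prod>j\<in>J. B j) \<le> 1" .
    have "p * (\<Prod>j\<in>J. a j) + (1-p) * (\<Prod>j\<in>J. b j)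
          = (p * (\<Prod>j\<in>J. A j) + (1-p) * (\<Prod>j\<in>J. B j)) * (\<Prod>j\<in>J. R j)"
      unfolding pa pb by (simp add: algebra_simps)
    also have "\<dots> \<le> 1 * (\<Prod>j\<in>J. R j)"
      using le1 R0 by (intro mult_right_mono) (auto simp: prod_nonneg)
    finally show ?thesis unfolding R_def S_def by simp
  qed
qed

lemma pow_powr_inv:
  fixes y :: real assumes "0 \<le> y" "m \<ge> 1"
  shows "(y ^ m) powr (1/real m) = y"
proof (cases "y = 0")
  case True then show ?thesis using assms by (simp add: power_0_left)
next
  case False
  then have pos: "y > 0" using assms by simp
  have "y ^ m = y powr real m" using pos by (simp add: powr_realpow)
  then show ?thesis using pos assms by (simp add: powr_powr)
qed

lemma finner:
  fixes f :: "'b \<Rightarrow> 'a set \<Rightarrow> real" and T :: "'b \<Rightarrow> 'a set"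
  assumes p: "0 \<le> p" "p \<le> 1" and fin: "finite I" "finite J" and m: "m \<ge> 1"
    and cov: "\<forall>i\<in>I. card {j\<in>J. i \<in> T j} = m"
    and nn: "\<forall>j\<in>J. \<forall>E. 0 \<le> f j E"
    and dep: "\<forall>j\<in>J. \<forall>E. f j E = f j (E \<inter> T j)"
  shows "ex p I (\<lambda>E. \<Prod>j\<in>J. f j E) \<le> (\<Prod>j\<in>J. ex p I (\<lambda>E. f j E ^ m) powr (1/real m))"
  using fin(1) cov nn dep
proof (induction I arbitrary: T f rule: finite_induct)
  case empty
  have "(\<Prod>j\<in>J. f j {}) = (\<Prod>j\<in>J. (f j {} ^ m) powr (1/real m))"
    using empty.prems(2) m by (intro prod.cong) (auto simp: pow_powr_inv)
  then show ?case by (simp add: ex_empty)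
next
  case (insert x I)
  define J1 where "J1 = J \<inter> {j. x \<in> T j}"
  define J2 where "J2 = J - {j. x \<in> T j}"
  define h where "h j E = (p * f j (insert x E) ^ m + (1-p) * f j (E - {x}) ^ m) powr (1/real m)" for j E
  define f' where "f' j = (if x \<in> T j then h j else f j)" for j
  define T' where "T' j = T j - {x}" for j
  have cJ1: "card J1 = m" using insert.prems(1) unfolding J1_def
    by (simp add: Int_def conj_commute)
  have d: "\<And>j E. j \<in> J \<Longrightarrow> f j E = f j (E \<inter> T j)" using insert.prems(3) by blast
  have fJ1: "finite J1" using fin unfolding J1_def by simp
  have f2: "f j (insert x E) = f j E" if "j \<in> J2" for j E
  proof -
    have "f j (insert x E) = f j (insert x E \<inter> T j)" using d[of j "insert x E"] that unfolding J2_def by blast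
    also have "insert x E \<inter> T j = E \<inter> T j" using that J2_def by auto
    also have "f j (E \<inter> T j) = f j E" using d[of j E] that unfolding J2_def by (metis DiffD1)
    finally show ?thesis .
  qed
  have step2: "p * (\<Prod>j\<in>J. f j (insert x E)) + (1-p) * (\<Prod>j\<in>J. f j E) \<le> (\<Prod>j\<in>J. f' j E)"
    if E: "E \<subseteq> I" for E
  proof -
    have xE: "E - {x} = E" using E insert.hyps by auto
    have s1: "(\<Prod>j\<in>J. g j) = (\<Prod>j\<in>J1. g j) * (\<Prod>j\<in>J2. g j)" for g :: "'b \<Rightarrow> real"
      unfolding J1_def J2_def by (rule prod.Int_Diff[OF fin(2)])
    have e2: "(\<Prod>j\<in>J2. f j (insert x E)) = (\<Prod>j\<in>J2. f j E)" using f2 by (intro prod.cong) auto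
    have e3: "(\<Prod>j\<in>J1. f' j E) = (\<Prod>j\<in>J1. h j E)" unfolding f'_def J1_def by (intro prod.cong) auto
    have e4: "(\<Prod>j\<in>J2. f' j E) = (\<Prod>j\<in>J2. f j E)" unfolding f'_def J2_def by (intro prod.cong) auto
    have hold: "p * (\<Prod>j\<in>J1. f j (insert x E)) + (1-p) * (\<Prod>j\<in>J1. f j E) \<le> (\<Prod>j\<in>J1. h j E)"
      using holder2[OF fJ1 cJ1 m p, of "\<lambda>j. f j (insert x E)" "\<lambda>j. f j E"] insert.prems(2)
      unfolding h_def xE J1_def by auto
    have nn2: "0 \<le> (\<Prod>j\<in>J2. f j E)" using insert.prems(2) J2_def by (auto intro: prod_nonneg)
    have "p * (\<Prod>j\<in>J. f j (insert x E)) + (1-p) * (\<Prod>j\<in>J. f j E)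
        = (p * (\<Prod>j\<in>J1. f j (insert x E)) + (1-p) * (\<Prod>j\<in>J1. f j E)) * (\<Prod>j\<in>J2. f j E)"
      unfolding s1 e2 by (simp add: algebra_simps)
    also have "\<dots> \<le> (\<Prod>j\<in>J1. h j E) * (\<Prod>j\<in>J2. f j E)"
      using hold nn2 by (rule mult_right_mono)
    also have "\<dots> = (\<Prod>j\<in>J. f' j E)" unfolding s1[of "\<lambda>j. f' j E"] e3 e4 ..
    finally show ?thesis .
  qed
  have IH: "ex p I (\<lambda>E. \<Prod>j\<in>J. f' j E) \<le> (\<Prod>j\<in>J. ex p I (\<lambda>E. f' j E ^ m) powr (1/real m))"
  proof (rule insert.IH)
    show "\<forall>i\<in>I. card {j\<in>J. i \<in> T' j} = m"
    proof
      fix i assume "i \<in> I"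
      then have "i \<noteq> x" using insert.hyps by auto
      then have "{j\<in>J. i \<in> T' j} = {j\<in>J. i \<in> T j}" unfolding T'_def by auto
      then show "card {j\<in>J. i \<in> T' j} = m" using insert.prems(1) \<open>i \<in> I\<close> by auto
    qed
    show "\<forall>j\<in>J. \<forall>E. 0 \<le> f' j E" using insert.prems(2) unfolding f'_def h_def by auto
    show "\<forall>j\<in>J. \<forall>E. f' j E = f' j (E \<inter> T' j)"
    proof (intro ballI allI)
      fix j E assume j: "j \<in> J"
      show "f' j E = f' j (E \<inter> T' j)"
      proof (cases "x \<in> T j")
        case True
        have a1: "f j (insert x E) = f j (insert x (E \<inter> T' j))"
        proof -
          have "f j (insert x E) = f j (insert x E \<inter> T j)" using d[of j "insert x E"] j by blast
          also have "insert x E \<inter> T j = insert x (E \<inter> T' j) \<inter> T j" using True unfolding T'_def by auto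
          also have "f j (insert x (E \<inter> T' j) \<inter> T j) = f j (insert x (E \<inter> T' j))"
            using d[of j] j by metis
          finally show ?thesis .
        qed
        have a2: "f j (E - {x}) = f j (E \<inter> T' j - {x})"
        proof -
          have "f j (E - {x}) = f j ((E - {x}) \<inter> T j)" using d[of j "E - {x}"] j by blast
          also have "(E - {x}) \<inter> T j = (E \<inter> T' j - {x}) \<inter> T j" unfolding T'_def by auto
          also have "f j ((E \<inter> T' j - {x}) \<inter> T j) = f j (E \<inter> T' j - {x})"
            using d[of j] j by metis
          finally show ?thesis .
        qed
        show ?thesis unfolding f'_def h_def using True a1 a2 by simp
      next
        case False
        then have "T' j = T j" unfolding T'_def by auto
        then show ?thesis unfolding f'_def using False d[of j E] j by simp
      qed
    qed
  qed
  have step4: "ex p I (\<lambda>E. f' j E ^ m) = ex p (insert x I) (\<lambda>E. f j E ^ m)" if j: "j \<in> J" for j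
  proof (cases "x \<in> T j")
    case True
    have "ex p I (\<lambda>E. f' j E ^ m) = ex p I (\<lambda>E. p * f j (insert x E) ^ m + (1-p) * f j E ^ m)"
    proof (rule ex_cong)
      fix E assume E: "E \<subseteq> I"
      then have xE: "E - {x} = E" using insert.hyps by auto
      have "0 \<le> p * f j (insert x E) ^ m + (1-p) * f j E ^ m" using p insert.prems(2) j by auto
      then show "f' j E ^ m = p * f j (insert x E) ^ m + (1-p) * f j E ^ m"
        unfolding f'_def h_def using True xE powr_inv_pow m by simp
    qed
    then show ?thesis using ex_insert[OF insert.hyps] by simp
  next
    case False
    then have "j \<in> J2" using j J2_def by auto
    have "ex p I (\<lambda>E. f' j E ^ m) = ex p I (\<lambda>E. p * f j (insert x E) ^ m + (1-p) * f j E ^ m)"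
      using f2[OF \<open>j \<in> J2\<close>] False unfolding f'_def by (intro ex_cong) (simp add: algebra_simps)
    then show ?thesis using ex_insert[OF insert.hyps] by simp
  qed
  have "ex p (insert x I) (\<lambda>E. \<Prod>j\<in>J. f j E)
      = ex p I (\<lambda>E. p * (\<Prod>j\<in>J. f j (insert x E)) + (1-p) * (\<Prod>j\<in>J. f j E))"
    by (rule ex_insert[OF insert.hyps])
  also have "\<dots> \<le> ex p I (\<lambda>E. \<Prod>j\<in>J. f' j E)"
    using p step2 by (intro ex_mono) auto
  also have "\<dots> \<le> (\<Prod>j\<in>J. ex p I (\<lambda>E. f' j E ^ m) powr (1/real m))" by (rule IH)
  also have "\<dots> = (\<Prod>j\<in>J. ex p (insert x I) (\<lambda>E. f j E ^ m) powr (1/real m))"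
    using step4 by (intro prod.cong) auto
  finally show ?case .
qed

definition shadow :: "nat \<Rightarrow> 'a set \<Rightarrow> 'a set set" where
  "shadow r S = {e. e \<subseteq> S \<and> card e = r}"

definition goodS :: "(nat set \<times> nat set set) set \<Rightarrow> nat \<Rightarrow> nat set \<Rightarrow> nat set set \<Rightarrow> bool" where
  "goodS F r S E \<longleftrightarrow> (\<forall>U\<subseteq>S. \<not> induced_copy F (E \<inter> shadow r S) U)"

lemma finite_shadow: "finite S \<Longrightarrow> finite (shadow r S)"
  unfolding shadow_def by (rule finite_subset[of _ "Pow S"]) auto

lemma r_sets_shadow: "r_sets r n = shadow r {0..<n}"
  unfolding r_sets_def shadow_def by simp

lemma finite_r_sets: "finite (r_sets r n)"
  by (simp add: r_sets_shadow finite_shadow)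

lemma ex_marginal_aux:
  assumes "finite D" "finite T" "D \<inter> T = {}" "\<And>E. g E = g (E \<inter> T)"
  shows "ex p (T \<union> D) g = ex p T g"
  using assms(1,3)
proof (induction D rule: finite_induct)
  case empty then show ?case by simp
next
  case (insert x D)
  have x: "x \<notin> T \<union> D" using insert by auto
  have fin: "finite (T \<union> D)" using insert assms by auto
  have gi: "g (insert x E) = g E" for E
  proof -
    have "g (insert x E) = g (insert x E \<inter> T)" by (rule assms(4))
    also have "insert x E \<inter> T = E \<inter> T" using insert by auto
    also have "g (E \<inter> T) = g E" by (rule assms(4)[symmetric])
    finally show ?thesis .
  qed
  have "ex p (T \<union> insert x D) g = ex p (insert x (T \<union> D)) g" by simp
  also have "\<dots> = ex p (T \<union> D) (\<lambda>E. p * g (insert x E) + (1-p) * g E)" by (rule ex_insert[OF fin x])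
  also have "\<dots> = ex p (T \<union> D) g" by (simp add: gi algebra_simps)
  also have "\<dots> = ex p T g" using insert by auto
  finally show ?case .
qed

lemma ex_marginal:
  assumes "finite I" "T \<subseteq> I" "\<And>E. g E = g (E \<inter> T)"
  shows "ex p I g = ex p T g"
proof -
  have "I = T \<union> (I - T)" using assms by auto
  then have "ex p I g = ex p (T \<union> (I - T)) g" by simp
  also have "\<dots> = ex p T g"
    using assms by (intro ex_marginal_aux) (auto intro: finite_subset)
  finally show ?thesis .
qed

lemma ex_bij:
  assumes bij: "bij_betw \<psi> T T'" and fin: "finite T"
  shows "ex p T (\<lambda>E. h (\<psi> ` E)) = ex p T' h"
proof -
  have bP: "bij_betw (image \<psi>) (Pow T) (Pow T')" by (rule bij_betw_Pow[OF bij])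
  have inj: "inj_on \<psi> T" using bij bij_betw_def by blast
  have mu: "mu p T' (\<psi> ` E) = mu p T E" if E: "E \<subseteq> T" for E
  proof -
    have c1: "card (\<psi> ` E) = card E" using inj E by (meson card_image inj_on_subset)
    have "T' - \<psi> ` E = \<psi> ` (T - E)" using bij E unfolding bij_betw_def inj_on_def by blast
    moreover have "card (\<psi> ` (T - E)) = card (T - E)" using inj by (meson Diff_subset card_image inj_on_subset)
    ultimately show ?thesis unfolding mu_def using c1 by simp
  qed
  have "ex p T' h = (\<Sum>E'\<in>Pow T'. mu p T' E' * h E')" unfolding ex_def ..
  also have "\<dots> = (\<Sum>E\<in>Pow T. mu p T' (\<psi> ` E) * h (\<psi> ` E))"
    by (rule sum.reindex_bij_betw[OF bP, symmetric])
  also have "\<dots> = (\<Sum>E\<in>Pow T. mu p T E * h (\<psi> ` E))" using mu by (intro sum.cong) auto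
  finally show ?thesis unfolding ex_def by simp
qed

lemma iso_transfer1:
  assumes inj: "inj_on \<phi> U" and X: "\<forall>e\<in>X. e \<subseteq> U" and iso: "hg_iso U X V H"
  shows "hg_iso (\<phi> ` U) ((\<lambda>e. \<phi> ` e) ` X) V H"
proof -
  obtain f where f: "bij_betw f U V" "(\<lambda>e. f ` e) ` X = H" using iso unfolding hg_iso_def by blast
  define g where "g = f \<circ> the_inv_into U \<phi>"
  have b1: "bij_betw (the_inv_into U \<phi>) (\<phi> ` U) U" by (rule bij_betw_the_inv_into) (simp add: inj inj_on_imp_bij_betw)
  have bg: "bij_betw g (\<phi> ` U) V" unfolding g_def using b1 f(1) by (rule bij_betw_trans)
  have im: "g ` (\<phi> ` e) = f ` e" if "e \<subseteq> U" for e
  proof -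
    have "g ` (\<phi> ` e) = f ` ((\<lambda>x. the_inv_into U \<phi> (\<phi> x)) ` e)" unfolding g_def by (simp add: image_comp)
    also have "(\<lambda>x. the_inv_into U \<phi> (\<phi> x)) ` e = e" using that inj by (auto simp: the_inv_into_f_f subsetD image_iff)
    finally show ?thesis .
  qed
  have "(\<lambda>e. g ` e) ` ((\<lambda>e. \<phi> ` e) ` X) = (\<lambda>e. f ` e) ` X"
    using im X by (auto simp: image_comp image_iff)
  then show ?thesis unfolding hg_iso_def using bg f(2) by blast
qed

lemma iso_transfer:
  assumes inj: "inj_on \<phi> U" and X: "\<forall>e\<in>X. e \<subseteq> U"
  shows "hg_iso (\<phi> ` U) ((\<lambda>e. \<phi> ` e) ` X) V H \<longleftrightarrow> hg_iso U X V H"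
proof
  assume "hg_iso U X V H" then show "hg_iso (\<phi> ` U) ((\<lambda>e. \<phi> ` e) ` X) V H" using iso_transfer1 inj X by blast
next
  assume a: "hg_iso (\<phi> ` U) ((\<lambda>e. \<phi> ` e) ` X) V H"
  define ph where "ph = the_inv_into U \<phi>"
  have inj': "inj_on ph (\<phi> ` U)" unfolding ph_def by (simp add: inj inj_on_the_inv_into)
  have bk: "ph ` (\<phi> ` e) = e" if "e \<subseteq> U" for e
    unfolding ph_def using that inj by (force simp: the_inv_into_f_f subsetD image_iff)
  have X': "\<forall>e\<in>(\<lambda>e. \<phi> ` e) ` X. e \<subseteq> \<phi> ` U" using X by auto
  have "hg_iso (ph ` (\<phi> ` U)) ((\<lambda>e. ph ` e) ` ((\<lambda>e. \<phi> ` e) ` X)) V H"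
    by (rule iso_transfer1[OF inj' X' a])
  moreover have "(\<lambda>e. ph ` e) ` ((\<lambda>e. \<phi> ` e) ` X) = X" using bk X by (force simp: image_comp image_iff)
  moreover have "ph ` (\<phi> ` U) = U" using bk by simp
  ultimately show "hg_iso U X V H" by simp
qed

lemma gnp_prob_ex: "gnp_prob r n p A = ex p (r_sets r n) (\<lambda>E. if E \<in> A then 1 else 0)"
proof -
  let ?R = "r_sets r n"
  have "gnp_prob r n p A = (\<Sum>E\<in>Pow ?R. if E \<in> A then p ^ card E * (1 - p) ^ (card ?R - card E) else 0)"
    unfolding gnp_prob_def by (rule sum.inter_filter) (simp add: finite_r_sets)
  also have "\<dots> = ex p ?R (\<lambda>E. if E \<in> A then 1 else 0)"
    unfolding ex_def mu_def
  proof (intro sum.cong refl)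
    fix E assume "E \<in> Pow ?R"
    then have "card (?R - E) = card ?R - card E"
      using finite_r_sets by (simp add: card_Diff_subset finite_subset)
    then show "(if E \<in> A then p ^ card E * (1 - p) ^ (card ?R - card E) else 0)
        = p ^ card E * (1 - p) ^ card (?R - E) * (if E \<in> A then 1 else 0)" by simp
  qed
  finally show ?thesis .
qed

lemma img_subset_iff:
  assumes "inj_on \<phi> S" "e \<subseteq> S" "U \<subseteq> S"
  shows "\<phi> ` e \<subseteq> \<phi> ` U \<longleftrightarrow> e \<subseteq> U"
  using assms inj_on_image_mem_iff[OF assms(1)] by blast

lemma induced_sub_img:
  assumes "inj_on \<phi> S" "\<forall>e\<in>E. e \<subseteq> S" "U \<subseteq> S"
  shows "induced_sub ((\<lambda>e. \<phi> ` e) ` E) (\<phi> ` U) = (\<lambda>e. \<phi> ` e) ` (induced_sub E U)"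
  unfolding induced_sub_def using img_subset_iff[OF assms(1) _ assms(3)] assms(2) by auto

lemma induced_copy_img:
  assumes inj: "inj_on \<phi> S" and E: "\<forall>e\<in>E. e \<subseteq> S" and U: "U \<subseteq> S"
  shows "induced_copy F ((\<lambda>e. \<phi> ` e) ` E) (\<phi> ` U) \<longleftrightarrow> induced_copy F E U"
proof -
  have injU: "inj_on \<phi> U" using inj U by (rule inj_on_subset)
  have X: "\<forall>e\<in>induced_sub E U. e \<subseteq> U" unfolding induced_sub_def by auto
  show ?thesis unfolding induced_copy_def induced_sub_img[OF inj E U]
    using iso_transfer[OF injU X] by auto
qed

lemma prob_good:
  assumes S: "S \<subseteq> {0..<n}" "card S = k"
  shows "ex p (r_sets r n) (\<lambda>E. if goodS F r S E then 1 else 0) = gnp_prob r k p (free_family r F k)"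
proof -
  have finS: "finite S" using S finite_subset by blast
  obtain \<phi> where phi: "bij_betw \<phi> S {0..<k}" using ex_bij_betw_finite_nat[OF finS] S by auto
  have inj: "inj_on \<phi> S" using phi bij_betw_def by blast
  define \<psi> where "\<psi> = (\<lambda>e. \<phi> ` e)"
  have bP: "bij_betw \<psi> (Pow S) (Pow {0..<k})" unfolding \<psi>_def by (rule bij_betw_Pow[OF phi])
  have bsh: "bij_betw \<psi> (shadow r S) (r_sets r k)"
    unfolding bij_betw_def
  proof
    show "inj_on \<psi> (shadow r S)" using bP unfolding bij_betw_def shadow_def
      by (rule inj_on_subset[OF conjunct1]) auto
    show "\<psi> ` shadow r S = r_sets r k"
    proof
      show "\<psi> ` shadow r S \<subseteq> r_sets r k"
      proof
        fix y assume "y \<in> \<psi> ` shadow r S"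
        then obtain e where e: "e \<subseteq> S" "card e = r" "y = \<phi> ` e" unfolding shadow_def \<psi>_def by auto
        have "card (\<phi> ` e) = card e" using inj e by (meson card_image inj_on_subset)
        moreover have "\<phi> ` e \<subseteq> {0..<k}" using phi e unfolding bij_betw_def by auto
        ultimately show "y \<in> r_sets r k" unfolding r_sets_def using e by simp
      qed
      show "r_sets r k \<subseteq> \<psi> ` shadow r S"
      proof
        fix y assume y: "y \<in> r_sets r k"
        then have "y \<in> Pow {0..<k}" unfolding r_sets_def by auto
        then obtain e where e: "e \<in> Pow S" "y = \<psi> e" using bP unfolding bij_betw_def by (metis PowD PowI imageE)
        have "card (\<phi> ` e) = card e" using inj e by (meson PowD card_image inj_on_subset)
        then have "card e = r" using y e unfolding r_sets_def \<psi>_def by simp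
        then show "y \<in> \<psi> ` shadow r S" using e unfolding shadow_def by auto
      qed
    qed
  qed
  have shsub: "shadow r S \<subseteq> r_sets r n" using S unfolding shadow_def r_sets_def by auto
  have step1: "ex p (r_sets r n) (\<lambda>E. if goodS F r S E then 1 else 0)
      = ex p (shadow r S) (\<lambda>E. if goodS F r S E then 1 else 0)"
    by (rule ex_marginal[OF finite_r_sets shsub]) (simp add: goodS_def Int_assoc)
  have key: "goodS F r S E \<longleftrightarrow> \<psi> ` E \<in> free_family r F k" if E: "E \<subseteq> shadow r S" for E
  proof -
    have EE: "E \<inter> shadow r S = E" using E by auto
    have Es: "\<forall>e\<in>E. e \<subseteq> S" using E unfolding shadow_def by auto
    have inPow: "\<psi> ` E \<in> Pow (r_sets r k)" using E bsh unfolding bij_betw_def by auto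
    have "(\<forall>U'\<subseteq>{0..<k}. \<not> induced_copy F (\<psi> ` E) U') \<longleftrightarrow> (\<forall>U\<subseteq>S. \<not> induced_copy F (\<psi> ` E) (\<phi> ` U))"
    proof
      assume "\<forall>U'\<subseteq>{0..<k}. \<not> induced_copy F (\<psi> ` E) U'"
      moreover have "\<phi> ` U \<subseteq> {0..<k}" if "U \<subseteq> S" for U using phi that unfolding bij_betw_def by auto
      ultimately show "\<forall>U\<subseteq>S. \<not> induced_copy F (\<psi> ` E) (\<phi> ` U)" by blast
    next
      assume a: "\<forall>U\<subseteq>S. \<not> induced_copy F (\<psi> ` E) (\<phi> ` U)"
      show "\<forall>U'\<subseteq>{0..<k}. \<not> induced_copy F (\<psi> ` E) U'"
      proof (intro allI impI)
        fix U' assume "U' \<subseteq> {0..<k}"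
        then obtain U where "U \<in> Pow S" "U' = \<psi> U" using bP unfolding bij_betw_def by (metis PowI imageE)
        then show "\<not> induced_copy F (\<psi> ` E) U'" using a unfolding \<psi>_def by auto
      qed
    qed
    also have "\<dots> \<longleftrightarrow> (\<forall>U\<subseteq>S. \<not> induced_copy F E U)"
      unfolding \<psi>_def using induced_copy_img[OF inj Es] by auto
    finally have eq: "(\<forall>U'\<subseteq>{0..<k}. \<not> induced_copy F (\<psi> ` E) U') \<longleftrightarrow> (\<forall>U\<subseteq>S. \<not> induced_copy F E U)" .
    show ?thesis unfolding goodS_def EE free_family_def induced_copies_def using inPow eq by auto
  qed
  have step2: "ex p (shadow r S) (\<lambda>E. if goodS F r S E then 1 else 0)
      = ex p (shadow r S) (\<lambda>E. (\<lambda>E'. if E' \<in> free_family r F k then 1 else 0) (\<psi> ` E))"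
    using key by (intro ex_cong) auto
  also have "\<dots> = ex p (r_sets r k) (\<lambda>E'. if E' \<in> free_family r F k then 1 else 0)"
    by (rule ex_bij[OF bsh finite_shadow[OF finS]])
  also have "\<dots> = gnp_prob r k p (free_family r F k)" by (rule gnp_prob_ex[symmetric])
  finally show ?thesis using step1 by simp
qed

lemma card_supersets:
  assumes A: "finite A" and C: "C \<subseteq> A" "card C \<le> k"
  shows "card {S. S \<subseteq> A \<and> card S = k \<and> C \<subseteq> S} = (card A - card C) choose (k - card C)"
proof -
  have fC: "finite C" using A C finite_subset by blast
  let ?X = "{S. S \<subseteq> A \<and> card S = k \<and> C \<subseteq> S}"
  let ?Y = "{T. T \<subseteq> A - C \<and> card T = k - card C}"
  have "bij_betw (\<lambda>S. S - C) ?X ?Y"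
  proof (rule bij_betw_byWitness[where f'="\<lambda>T. T \<union> C"])
    show "\<forall>a\<in>?X. a - C \<union> C = a" by auto
    show "\<forall>a\<in>?Y. a \<union> C - C = a" by auto
    show "(\<lambda>S. S - C) ` ?X \<subseteq> ?Y"
    proof
      fix y assume "y \<in> (\<lambda>S. S - C) ` ?X"
      then obtain S where S: "S \<subseteq> A" "card S = k" "C \<subseteq> S" "y = S - C" by auto
      have "finite S" using S A finite_subset by blast
      then have "card (S - C) = card S - card C" using S fC by (simp add: card_Diff_subset)
      then show "y \<in> ?Y" using S by auto
    qed
    show "(\<lambda>T. T \<union> C) ` ?Y \<subseteq> ?X"
    proof
      fix y assume "y \<in> (\<lambda>T. T \<union> C) ` ?Y"
      then obtain T where T: "T \<subseteq> A - C" "card T = k - card C" "y = T \<union> C" by auto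
      have "finite T" using T A finite_subset by blast
      then have "card (T \<union> C) = card T + card C" using T fC by (subst card_Un_disjoint) auto
      then show "y \<in> ?X" using T C by auto
    qed
  qed
  then have "card ?X = card ?Y" by (rule bij_betw_same_card)
  also have "\<dots> = card (A - C) choose (k - card C)" by (rule n_subsets) (use A in auto)
  also have "card (A - C) = card A - card C" using C fC by (simp add: card_Diff_subset)
  finally show ?thesis .
qed

lemma choose_shift_mono:
  "d \<le> b \<Longrightarrow> b \<le> a \<Longrightarrow> (a - d) choose (b - d) \<le> a choose b"
proof (induction d arbitrary: a b)
  case 0 then show ?case by simp
next
  case (Suc d)
  obtain a' where a': "a - d = Suc a'" using Suc.prems by (metis Suc_diff_Suc le_trans less_eq_Suc_le)
  obtain b' where b': "b - d = Suc b'" using Suc.prems by (metis Suc_diff_Suc less_eq_Suc_le)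
  have "a - Suc d = a'" "b - Suc d = b'" using a' b' by auto
  then have "(a - Suc d) choose (b - Suc d) \<le> (a - d) choose (b - d)" using a' b' by simp
  also have "\<dots> \<le> a choose b" using Suc by simp
  finally show ?case .
qed

definition Ksets :: "nat \<Rightarrow> nat \<Rightarrow> nat set set" where
  "Ksets n k = {S. S \<subseteq> {0..<n} \<and> card S = k}"

lemma finite_Ksets: "finite (Ksets n k)"
  unfolding Ksets_def by (rule finite_subset[of _ "Pow {0..<n}"]) auto

lemma card_Ksets: "card (Ksets n k) = n choose k"
  unfolding Ksets_def using n_subsets[of "{0..<n}" k] by simp

lemma ex_sum: "finite K \<Longrightarrow> ex p I (\<lambda>E. \<Sum>S\<in>K. g S E) = (\<Sum>S\<in>K. ex p I (g S))"
  unfolding ex_def by (simp add: sum_distrib_left sum.swap[of _ "Pow I"])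

lemma prod_if_pow: "finite K \<Longrightarrow> (\<Prod>S\<in>K. if P S then (a::real) else 1) = a ^ card {S\<in>K. P S}"
  by (simp add: prod.inter_filter[symmetric])

lemma ex_le1:
  assumes "0 \<le> p" "p \<le> 1" "finite I" "\<And>E. 0 \<le> g E" "\<And>E. g E \<le> 1"
  shows "ex p I g \<le> 1"
proof -
  have "ex p I g \<le> ex p I (\<lambda>_. 1)" using assms by (intro ex_mono) auto
  then show ?thesis using ex_const[OF assms(3)] by simp
qed

lemma gnp_le1: "0 \<le> p \<Longrightarrow> p \<le> 1 \<Longrightarrow> gnp_prob r n p A \<le> 1"
  unfolding gnp_prob_ex by (rule ex_le1) (auto simp: finite_r_sets)

lemma gnp_nonneg: "0 \<le> p \<Longrightarrow> p \<le> 1 \<Longrightarrow> 0 \<le> gnp_prob r n p A"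
  unfolding gnp_prob_ex by (rule ex_nonneg) auto

lemma goodS_dep: "goodS F r S (E \<inter> shadow r S) = goodS F r S E"
  unfolding goodS_def by (simp add: Int_assoc)

lemma prob_bound:
  assumes p: "0 < p" "p < 1" and rk: "1 \<le> r" "r \<le> k" "k \<le> n"
    and q: "q = gnp_prob r k p (free_family r F k)" "q > 0"
    and A: "A \<subseteq> Pow (r_sets r n)"
    and many: "\<forall>E\<in>A. (1 - \<eta>) * real (n choose k) \<le> real (card {S\<in>Ksets n k. goodS F r S E})"
  shows "gnp_prob r n p A \<le> 2 powr (real (n choose k) / real ((n-r) choose (k-r)))
            * q powr ((1 - \<eta>) * real (n choose k) / real ((n-r) choose (k-r)))"
proof -
  define m where "m = (n-r) choose (k-r)"
  define N where "N = n choose k"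
  define I where "I = r_sets r n"
  define K where "K = Ksets n k"
  have m1: "m \<ge> 1" unfolding m_def using rk by (simp add: Suc_leI)
  have q1: "q \<le> 1" using q gnp_le1 p by simp
  define a where "a = q powr (-1/real m)"
  have apos: "a > 0" unfolding a_def using q by simp
  have qm: "q powr (1/real m) \<le> 1" using q q1 by (intro powr_le1) auto
  have qm0: "q powr (1/real m) > 0" using q by simp
  have a1: "a \<ge> 1" unfolding a_def using qm qm0
    by (simp add: powr_minus_divide)
  have am: "a ^ m = 1 / q"
  proof -
    have "a ^ m = a powr real m" using apos by (simp add: powr_realpow)
    also have "\<dots> = q powr (-1)" unfolding a_def using m1 q by (simp add: powr_powr)
    finally show ?thesis using q by (simp add: powr_minus_divide)
  qed
  define f where "f S E = (if goodS F r S E then a else 1)" for S E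
  have finI: "finite I" unfolding I_def by (rule finite_r_sets)
  have finK: "finite K" unfolding K_def by (rule finite_Ksets)
  have fin: "ex p I (\<lambda>E. \<Prod>S\<in>K. f S E) \<le> (\<Prod>S\<in>K. ex p I (\<lambda>E. f S E ^ m) powr (1/real m))"
  proof (rule finner)
    show "0 \<le> p" "p \<le> 1" using p by auto
    show "finite I" "finite K" "1 \<le> m" by (fact finI, fact finK, fact m1)
    show "\<forall>i\<in>I. card {S\<in>K. i \<in> shadow r S} = m"
    proof
      fix e assume e: "e \<in> I"
      then have "{S\<in>K. e \<in> shadow r S} = {S. S \<subseteq> {0..<n} \<and> card S = k \<and> e \<subseteq> S}"
        unfolding K_def Ksets_def shadow_def I_def r_sets_def by auto
      also have "card \<dots> = (card {0..<n} - card e) choose (k - card e)"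
        using e rk unfolding I_def r_sets_def by (intro card_supersets) auto
      finally show "card {S\<in>K. e \<in> shadow r S} = m" using e unfolding m_def I_def r_sets_def by simp
    qed
    show "\<forall>j\<in>K. \<forall>E. 0 \<le> f j E" unfolding f_def using apos by auto
    show "\<forall>j\<in>K. \<forall>E. f j E = f j (E \<inter> shadow r j)" unfolding f_def by (simp add: goodS_dep)
  qed
  have exf: "ex p I (\<lambda>E. f S E ^ m) = 2 - q" if "S \<in> K" for S
  proof -
    have "ex p I (\<lambda>E. f S E ^ m) = ex p I (\<lambda>E. 1 * 1 + (a^m - 1) * (if goodS F r S E then 1 else 0))"
      unfolding f_def by (intro ex_cong) auto
    also have "\<dots> = 1 * ex p I (\<lambda>_. 1) + (a^m - 1) * ex p I (\<lambda>E. if goodS F r S E then 1 else 0)"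
      by (rule ex_linear)
    also have "ex p I (\<lambda>E. if goodS F r S E then 1 else 0) = q"
      using that q unfolding I_def K_def Ksets_def by (simp add: prob_good)
    also have "ex p I (\<lambda>_. 1) = 1" by (rule ex_const[OF finI])
    finally have e1: "ex p I (\<lambda>E. f S E ^ m) = 1 + (a^m - 1) * q" by simp
    have "(a^m - 1) * q = 1 - q" using am q by (simp add: field_simps)
    then show ?thesis using e1 by simp
  qed
  have rhs: "(\<Prod>S\<in>K. ex p I (\<lambda>E. f S E ^ m) powr (1/real m)) \<le> 2 powr (real N / real m)"
  proof -
    have "(\<Prod>S\<in>K. ex p I (\<lambda>E. f S E ^ m) powr (1/real m)) = (\<Prod>S\<in>K. (2 - q) powr (1/real m))"
      using exf by (intro prod.cong) auto
    also have "\<dots> \<le> (\<Prod>S\<in>K. 2 powr (1/real m))"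
      using q(2) q1 by (intro prod_mono conjI) (auto intro!: powr_mono2)
    also have "\<dots> = (2 powr (1/real m)) ^ N" unfolding N_def K_def by (simp add: card_Ksets)
    also have "\<dots> = 2 powr (real N / real m)" by (simp add: powr_realpow[symmetric] powr_powr)
    finally show ?thesis .
  qed
  define X where "X = (1 - \<eta>) * real N"
  have lhs: "a powr X * gnp_prob r n p A \<le> ex p I (\<lambda>E. \<Prod>S\<in>K. f S E)"
  proof -
    have "a powr X * gnp_prob r n p A = ex p I (\<lambda>E. a powr X * (if E \<in> A then 1 else 0) + 0 * 0)"
      unfolding gnp_prob_ex I_def by (subst ex_linear) simp
    also have "\<dots> \<le> ex p I (\<lambda>E. \<Prod>S\<in>K. f S E)"
    proof (rule ex_mono)
      show "0 \<le> p" "p \<le> 1" using p by auto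
      fix E assume "E \<subseteq> I"
      have pe: "(\<Prod>S\<in>K. f S E) = a ^ card {S\<in>K. goodS F r S E}"
        unfolding f_def by (rule prod_if_pow[OF finK])
      show "a powr X * (if E \<in> A then 1 else 0) + 0 * 0 \<le> (\<Prod>S\<in>K. f S E)"
      proof (cases "E \<in> A")
        case True
        then have "X \<le> real (card {S\<in>K. goodS F r S E})"
          using many unfolding X_def N_def K_def by auto
        then have "a powr X \<le> a powr real (card {S\<in>K. goodS F r S E})"
          using a1 by (intro powr_mono) auto
        also have "\<dots> = a ^ card {S\<in>K. goodS F r S E}" using apos by (simp add: powr_realpow)
        finally show ?thesis using True pe by simp
      next
        case False
        then show ?thesis using pe apos by simp
      qed
    qed
    finally show ?thesis .
  qed
  have aX: "a powr X > 0" using apos by simp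
  have "gnp_prob r n p A \<le> 2 powr (real N / real m) / a powr X"
    using lhs fin rhs aX by (simp add: field_simps)
  also have "1 / a powr X = q powr (X / real m)"
  proof -
    have "a powr X = q powr (- (X / real m))" unfolding a_def by (simp add: powr_powr)
    then show ?thesis by (simp add: powr_minus divide_inverse)
  qed
  then have "2 powr (real N / real m) / a powr X = 2 powr (real N / real m) * q powr (X / real m)"
    by (metis times_divide_eq_right mult_1_right)
  finally show ?thesis unfolding X_def N_def m_def by simp
qed

lemma prob_bound0:
  assumes p: "0 < p" "p < 1" and rk: "r \<le> k" "k \<le> n"
    and q: "gnp_prob r k p (free_family r F k) = 0" and eta: "\<eta> < 1"
    and A: "A \<subseteq> Pow (r_sets r n)"
    and many: "\<forall>E\<in>A. (1 - \<eta>) * real (n choose k) \<le> real (card {S\<in>Ksets n k. goodS F r S E})"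
  shows "gnp_prob r n p A \<le> 0"
proof -
  define K where "K = Ksets n k"
  define D where "D = (1 - \<eta>) * real (n choose k)"
  have N1: "n choose k \<ge> 1" using rk by (simp add: Suc_leI)
  have D0: "D > 0" unfolding D_def using eta N1 rk by (intro mult_pos_pos) auto
  have "gnp_prob r n p A = ex p (r_sets r n) (\<lambda>E. if E \<in> A then 1 else 0)" by (rule gnp_prob_ex)
  also have "\<dots> \<le> ex p (r_sets r n) (\<lambda>E. \<Sum>S\<in>K. (1/D) * (if goodS F r S E then 1 else 0))"
  proof (rule ex_mono)
    show "0 \<le> p" "p \<le> 1" using p by auto
    fix E assume "E \<subseteq> r_sets r n"
    have fK: "finite K" unfolding K_def by (rule finite_Ksets)
    have c: "(\<Sum>S\<in>K. (if goodS F r S E then 1 else 0::real)) = real (card {S\<in>K. goodS F r S E})"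
      using sum.inter_filter[OF fK, of "\<lambda>_. 1::real" "\<lambda>S. goodS F r S E"] by simp
    have s: "(\<Sum>S\<in>K. (1/D) * (if goodS F r S E then 1 else 0)) = real (card {S\<in>K. goodS F r S E}) / D"
      unfolding sum_distrib_left[symmetric] c by simp
    show "(if E \<in> A then 1 else 0) \<le> (\<Sum>S\<in>K. (1/D) * (if goodS F r S E then 1 else 0))"
      unfolding s using many D0 unfolding K_def D_def by (auto simp: le_divide_eq_1_pos)
  qed
  also have "\<dots> = (\<Sum>S\<in>K. ex p (r_sets r n) (\<lambda>E. (1/D) * (if goodS F r S E then 1 else 0) + 0 * 0))"
    by (simp add: ex_sum finite_Ksets K_def)
  also have "\<dots> = 0"
  proof (rule sum.neutral, rule ballI)
    fix S assume "S \<in> K"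
    then have "ex p (r_sets r n) (\<lambda>E. if goodS F r S E then 1 else 0) = 0"
      using q unfolding K_def Ksets_def by (simp add: prob_good)
    then show "ex p (r_sets r n) (\<lambda>E. (1/D) * (if goodS F r S E then 1 else 0) + 0 * 0) = 0"
      by (subst ex_linear) simp
  qed
  finally show ?thesis .
qed

lemma bad_bound:
  assumes F: "\<forall>(V, H)\<in>F. uniform_hg r V H \<and> card V \<ge> t"
    and E: "E \<subseteq> r_sets r n" and tk: "t \<le> k" "k \<le> n"
  shows "card {S\<in>Ksets n k. \<not> goodS F r S E} \<le> card (induced_copies F n E) * ((n-t) choose (k-t))"
proof -
  define Cop where "Cop = induced_copies F n E"
  have finCop: "finite Cop" unfolding Cop_def induced_copies_def
    by (rule finite_subset[of _ "Pow {0..<n}"]) auto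
  have sub: "{S\<in>Ksets n k. \<not> goodS F r S E} \<subseteq> (\<Union>C\<in>Cop. {S\<in>Ksets n k. C \<subseteq> S})"
  proof
    fix S assume S: "S \<in> {S\<in>Ksets n k. \<not> goodS F r S E}"
    then obtain U where U: "U \<subseteq> S" "induced_copy F (E \<inter> shadow r S) U" unfolding goodS_def by auto
    have "induced_sub (E \<inter> shadow r S) U = induced_sub E U"
      using U(1) E unfolding induced_sub_def shadow_def r_sets_def by auto
    then have "induced_copy F E U" using U(2) unfolding induced_copy_def by simp
    moreover have "U \<subseteq> {0..<n}" using U(1) S unfolding Ksets_def by auto
    ultimately have "U \<in> Cop" unfolding Cop_def induced_copies_def by auto
    then show "S \<in> (\<Union>C\<in>Cop. {S\<in>Ksets n k. C \<subseteq> S})" using U(1) S by auto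
  qed
  have each: "card {S\<in>Ksets n k. C \<subseteq> S} \<le> (n-t) choose (k-t)" if C: "C \<in> Cop" for C
  proof -
    have Cn: "C \<subseteq> {0..<n}" using C unfolding Cop_def induced_copies_def by auto
    then have fC: "finite C" using finite_subset by blast
    obtain V H where VH: "(V, H) \<in> F" "hg_iso C (induced_sub E C) V H"
      using C unfolding Cop_def induced_copies_def induced_copy_def by auto
    obtain f where "bij_betw f C V" using VH(2) unfolding hg_iso_def by auto
    then have "card C = card V" by (rule bij_betw_same_card)
    then have Ct: "card C \<ge> t" using F VH(1) by auto
    show ?thesis
    proof (cases "card C \<le> k")
      case True
      have "card {S\<in>Ksets n k. C \<subseteq> S} = card {S. S \<subseteq> {0..<n} \<and> card S = k \<and> C \<subseteq> S}"
        unfolding Ksets_def by (rule arg_cong[where f=card]) auto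
      also have "\<dots> = (n - card C) choose (k - card C)"
        using card_supersets[of "{0..<n}" C k] Cn True by simp
      also have "\<dots> \<le> (n-t) choose (k-t)"
        using choose_shift_mono[of "card C - t" "k - t" "n - t"] True Ct tk
        by (simp add: diff_diff_left)
      finally show ?thesis .
    next
      case False
      have "{S\<in>Ksets n k. C \<subseteq> S} = {}"
      proof (rule ccontr)
        assume "{S\<in>Ksets n k. C \<subseteq> S} \<noteq> {}"
        then obtain S where "S \<subseteq> {0..<n}" "card S = k" "C \<subseteq> S" unfolding Ksets_def by auto
        then have "card C \<le> k" by (metis card_mono finite_atLeastLessThan finite_subset)
        then show False using False by simp
      qed
      then show ?thesis by (metis card.empty zero_le)
    qed
  qed
  have "card {S\<in>Ksets n k. \<not> goodS F r S E} \<le> card (\<Union>C\<in>Cop. {S\<in>Ksets n k. C \<subseteq> S})"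
    by (rule card_mono[OF _ sub]) (use finite_Ksets finCop in auto)
  also have "\<dots> \<le> (\<Sum>C\<in>Cop. card {S\<in>Ksets n k. C \<subseteq> S})" by (rule card_UN_le[OF finCop])
  also have "\<dots> \<le> (\<Sum>C\<in>Cop. (n-t) choose (k-t))" using each by (rule sum_mono)
  also have "\<dots> = card Cop * ((n-t) choose (k-t))" by simp
  finally show ?thesis unfolding Cop_def .
qed

lemma cseq_nonneg: assumes "0 \<le> p" "p \<le> 1" shows "0 \<le> c_seq r p F n"
proof -
  define g where "g = gnp_prob r n p (free_family r F n)"
  have g: "0 \<le> g" "g \<le> 1" unfolding g_def using assms gnp_nonneg gnp_le1 by auto
  have "log 2 g \<le> 0"
  proof (cases "g = 0")
    case True then show ?thesis by (simp add: log_def)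
  next
    case False then show ?thesis using g by simp
  qed
  then show ?thesis unfolding c_seq_def g_def[symmetric] by (simp add: divide_nonpos_nonneg)
qed

lemma ratio_bound:
  fixes x \<eta> :: real
  assumes tk: "t \<le> k" "k \<le> n" "1 \<le> k" and eta: "0 \<le> \<eta>"
    and x: "x \<le> \<eta> / (real k * real t) ^ t * real n ^ t" "0 \<le> x"
  shows "x * real ((n-t) choose (k-t)) \<le> \<eta> * real (n choose k)"
proof (cases "t = 0")
  case True then show ?thesis using x by (simp add: mult_right_mono)
next
  case False
  define bb where "bb = real ((n-t) choose (k-t))"
  define N where "N = real (n choose k)"
  have e1: "N * real (k choose t) = real (n choose t) * bb"
    unfolding N_def bb_def using choose_mult[of t k n] tk by (metis of_nat_mult)
  have bkt: "real (k choose t) \<le> real k ^ t" using binomial_le_pow[of t k] tk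
    by (metis of_nat_le_iff of_nat_power)
  have bnt: "(real n / real t) ^ t \<le> real (n choose t)" using binomial_ge_n_over_k_pow_k[of t n] tk by simp
  have tpos: "real t > 0" using False by simp
  have bb0: "0 \<le> bb" "0 \<le> N" unfolding bb_def N_def by auto
  have "bb * real n ^ t = bb * (real t ^ t * (real n / real t) ^ t)"
    using tpos by (simp add: power_divide)
  also have "\<dots> \<le> bb * (real t ^ t * real (n choose t))"
    using bb0 bnt by (intro mult_left_mono) auto
  also have "\<dots> = real t ^ t * (N * real (k choose t))" using e1 by (simp add: algebra_simps)
  also have "\<dots> \<le> real t ^ t * (N * real k ^ t)" using bkt bb0 by (intro mult_left_mono) auto
  finally have key: "bb * real n ^ t \<le> real t ^ t * (N * real k ^ t)" .
  have kt: "(real k * real t) ^ t > 0" using tk tpos by simp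
  have "x * bb \<le> \<eta> / (real k * real t) ^ t * real n ^ t * bb"
    using x bb0 by (intro mult_right_mono) auto
  also have "\<dots> = \<eta> / (real k * real t) ^ t * (bb * real n ^ t)" by simp
  also have "\<dots> \<le> \<eta> / (real k * real t) ^ t * (real t ^ t * (N * real k ^ t))"
    using key eta kt by (intro mult_left_mono) auto
  also have "\<dots> = \<eta> * N" using kt tk by (simp add: power_mult_distrib field_simps)
  finally show ?thesis unfolding bb_def N_def .
qed

theorem theorem2:
  fixes r t :: nat and p c :: real and F :: "(nat set \<times> nat set set) set"
  assumes r: "r \<ge> 2"
    and F: "\<forall>(V, H)\<in>F. uniform_hg r V H \<and> card V \<ge> t"
    and p: "0 < p" "p < 1"
    and c: "c_seq r p F \<longlonglongrightarrow> c"
  shows "\<forall>\<epsilon>>0. \<exists>n0::nat. \<exists>\<delta>>0::real. \<forall>n>n0. \<forall>A.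
           A \<subseteq> Pow (r_sets r n) \<longrightarrow>
           gnp_prob r n p A > 2 powr ((- c + \<epsilon>) * real (n choose r)) \<longrightarrow>
           (\<exists>E\<in>A. real (card (induced_copies F n E)) \<ge> \<delta> * real n ^ t)"
proof (intro allI impI)
  fix \<epsilon> :: real assume \<epsilon>: "\<epsilon> > 0"
  have c0: "0 \<le> c" by (rule LIMSEQ_le_const[OF c]) (use cseq_nonneg p in auto)
  obtain K0 where K0: "\<forall>k\<ge>K0. norm (c_seq r p F k - c) < \<epsilon>/4"
    using LIMSEQ_D[OF c, of "\<epsilon>/4"] \<epsilon> by auto
  define k where "k = max K0 (max r (max t (nat \<lceil>4 * real r / \<epsilon>\<rceil>)))"
  have kr: "r \<le> k" and kt: "t \<le> k" and kK: "K0 \<le> k" unfolding k_def by auto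
  have k4: "4 * real r / \<epsilon> \<le> real k"
  proof -
    have "4 * real r / \<epsilon> \<le> real (nat \<lceil>4 * real r / \<epsilon>\<rceil>)" by linarith
    also have "\<dots> \<le> real k" unfolding k_def by (simp only: of_nat_le_iff)
    finally show ?thesis .
  qed
  have k1: "1 \<le> k" using kr r by simp
  define ck where "ck = c_seq r p F k"
  define q where "q = gnp_prob r k p (free_family r F k)"
  define bk where "bk = real (k choose r)"
  have ck_close: "\<bar>ck - c\<bar> < \<epsilon>/4" using K0 kK unfolding ck_def by auto
  have ck0: "0 \<le> ck" unfolding ck_def using cseq_nonneg p by auto
  have rpos: "real r > 0" using r by simp
  have kr1: "real k / real r \<ge> 1" using kr rpos by simp
  have bk_ge: "real k / real r \<le> bk"
  proof -
    have "real k / real r \<le> (real k / real r) ^ r" using kr1 r by (intro self_le_power) auto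
    also have "\<dots> \<le> bk" unfolding bk_def using binomial_ge_n_over_k_pow_k[of r k] kr by simp
    finally show ?thesis .
  qed
  have bkpos: "bk > 0" using bk_ge kr1 by linarith
  have inv_bk: "1 / bk \<le> \<epsilon>/4"
  proof -
    have "1 / bk \<le> 1 / (real k / real r)" using bk_ge kr1 bkpos k1 rpos by (intro divide_left_mono) auto
    also have "\<dots> = real r / real k" by simp
    also have "\<dots> \<le> \<epsilon> / 4" using k4 \<epsilon> k1 rpos by (simp add: field_simps)
    finally show ?thesis .
  qed
  define \<eta> where "\<eta> = min (1/2) (\<epsilon> / (4 * (c + \<epsilon> + 1)))"
  have eta0: "\<eta> > 0" unfolding \<eta>_def using \<epsilon> c0 by simp
  have eta1: "\<eta> \<le> 1/2" unfolding \<eta>_def by (rule min.cobounded1)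
  have eta_ck: "\<eta> * ck \<le> \<epsilon>/4"
  proof -
    have "ck \<le> c + \<epsilon> + 1" using ck_close \<epsilon> by linarith
    then have "\<eta> * ck \<le> (\<epsilon> / (4 * (c + \<epsilon> + 1))) * (c + \<epsilon> + 1)"
      using ck0 eta0 unfolding \<eta>_def by (intro mult_mono) auto
    also have "\<dots> = \<epsilon>/4" using c0 \<epsilon> by (simp add: field_simps)
    finally show ?thesis .
  qed
  define \<delta> where "\<delta> = \<eta> / (real k * real t) ^ t"
  have delta0: "\<delta> > 0"
  proof (cases "t = 0")
    case True then show ?thesis unfolding \<delta>_def using eta0 by simp
  next
    case False then show ?thesis unfolding \<delta>_def using eta0 k1 by simp
  qed
  show "\<exists>n0::nat. \<exists>\<delta>>0::real. \<forall>n>n0. \<forall>A.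
           A \<subseteq> Pow (r_sets r n) \<longrightarrow>
           gnp_prob r n p A > 2 powr ((- c + \<epsilon>) * real (n choose r)) \<longrightarrow>
           (\<exists>E\<in>A. real (card (induced_copies F n E)) \<ge> \<delta> * real n ^ t)"
  proof (intro exI[of _ k] exI[of _ \<delta>] conjI delta0 allI impI)
    fix n A assume nk: "k < n" and A: "A \<subseteq> Pow (r_sets r n)"
      and big: "gnp_prob r n p A > 2 powr ((- c + \<epsilon>) * real (n choose r))"
    show "\<exists>E\<in>A. real (card (induced_copies F n E)) \<ge> \<delta> * real n ^ t"
    proof (rule ccontr)
      assume "\<not> ?thesis"
      then have few: "\<forall>E\<in>A. real (card (induced_copies F n E)) < \<delta> * real n ^ t" by auto
      define N where "N = n choose k"
      have many: "\<forall>E\<in>A. (1 - \<eta>) * real N \<le> real (card {S\<in>Ksets n k. goodS F r S E})"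
      proof
        fix E assume E: "E \<in> A"
        then have Er: "E \<subseteq> r_sets r n" using A by auto
        have b1: "card {S\<in>Ksets n k. \<not> goodS F r S E} \<le> card (induced_copies F n E) * ((n-t) choose (k-t))"
          by (rule bad_bound[OF F Er kt]) (use nk in simp)
        have b2: "real (card (induced_copies F n E)) * real ((n-t) choose (k-t)) \<le> \<eta> * real N"
          unfolding N_def using few E eta0 kt nk k1
          by (intro ratio_bound) (auto simp: \<delta>_def less_imp_le)
        have bad: "real (card {S\<in>Ksets n k. \<not> goodS F r S E}) \<le> \<eta> * real N"
        proof -
          have "real (card {S\<in>Ksets n k. \<not> goodS F r S E}) \<le> real (card (induced_copies F n E) * ((n-t) choose (k-t)))"
            using b1 by (simp only: of_nat_le_iff)
          then show ?thesis using b2 by simp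
        qed
        have split: "card {S\<in>Ksets n k. goodS F r S E} + card {S\<in>Ksets n k. \<not> goodS F r S E} = N"
        proof -
          have "card ({S\<in>Ksets n k. goodS F r S E} \<union> {S\<in>Ksets n k. \<not> goodS F r S E})
              = card {S\<in>Ksets n k. goodS F r S E} + card {S\<in>Ksets n k. \<not> goodS F r S E}"
            by (rule card_Un_disjoint) (use finite_Ksets in auto)
          moreover have "{S\<in>Ksets n k. goodS F r S E} \<union> {S\<in>Ksets n k. \<not> goodS F r S E} = Ksets n k" by auto
          ultimately show ?thesis unfolding N_def using card_Ksets by simp
        qed
        then have "real (card {S\<in>Ksets n k. goodS F r S E}) + real (card {S\<in>Ksets n k. \<not> goodS F r S E}) = real N"
          by (simp only: of_nat_add[symmetric])
        then show "(1 - \<eta>) * real N \<le> real (card {S\<in>Ksets n k. goodS F r S E})"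
          using bad by (simp add: algebra_simps)
      qed
      have pos2: "2 powr ((- c + \<epsilon>) * real (n choose r)) > 0" by simp
      have q0: "0 \<le> q" unfolding q_def using gnp_nonneg p by auto
      show False
      proof (cases "q = 0")
        case True
        have "gnp_prob r n p A \<le> 0"
          by (rule prob_bound0[OF p kr _ _ _ A]) (use True q_def nk eta1 many N_def in auto)
        then show False using big pos2 by linarith
      next
        case False
        then have qpos: "q > 0" using q0 by simp
        define m where "m = real ((n-r) choose (k-r))"
        define Bn where "Bn = real (n choose r)"
        have le: "gnp_prob r n p A \<le> 2 powr (real N / m) * q powr ((1 - \<eta>) * real N / m)"
          unfolding m_def N_def
          by (rule prob_bound[OF p _ kr _ _ qpos A]) (use r nk q_def many N_def in auto)
        have mpos: "m > 0" unfolding m_def using kr nk by simp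
        have cm: "real N * bk = Bn * m"
          unfolding N_def bk_def Bn_def m_def using choose_mult[of r k n] kr nk by (simp only: of_nat_mult[symmetric])
        have Nm: "real N / m = Bn / bk" using cm mpos bkpos by (simp add: field_simps)
        have lq: "log 2 q = - ck * bk" unfolding ck_def c_seq_def q_def[symmetric] bk_def[symmetric]
          using bkpos by simp
        have "q powr ((1 - \<eta>) * real N / m) = 2 powr (log 2 q * ((1 - \<eta>) * real N / m))"
        proof -
          have "2 powr (log 2 q * ((1 - \<eta>) * real N / m)) = (2 powr (log 2 q)) powr ((1 - \<eta>) * real N / m)"
            by (simp only: powr_powr)
          then show ?thesis using qpos by simp
        qed
        then have qe: "q powr ((1 - \<eta>) * real N / m) = 2 powr ((- ck * bk) * ((1 - \<eta>) * (Bn / bk)))"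
          unfolding lq using Nm by (metis times_divide_eq_right)
        have "2 powr (real N / m) * q powr ((1 - \<eta>) * real N / m)
            = 2 powr (Bn / bk + (- ck * bk) * ((1 - \<eta>) * (Bn / bk)))"
          unfolding qe Nm by (simp only: powr_add)
        also have "Bn / bk + (- ck * bk) * ((1 - \<eta>) * (Bn / bk)) = Bn * (1/bk - ck + \<eta> * ck)"
          using bkpos by (simp add: field_simps)
        also have "2 powr (Bn * (1/bk - ck + \<eta> * ck)) \<le> 2 powr ((- c + \<epsilon>) * Bn)"
        proof (rule powr_mono)
          have "1/bk - ck + \<eta> * ck \<le> - c + \<epsilon>" using inv_bk ck_close eta_ck by linarith
          moreover have "Bn \<ge> 0" unfolding Bn_def by simp
          ultimately show "Bn * (1/bk - ck + \<eta> * ck) \<le> (- c + \<epsilon>) * Bn"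
            by (simp add: mult_left_mono mult.commute)
        qed simp
        finally have "gnp_prob r n p A \<le> 2 powr ((- c + \<epsilon>) * Bn)" using le by linarith
        then show False using big unfolding Bn_def by linarith
      qed
    qed
  qed
qed

end
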